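(* Consider the single-node stochastic clearing problem described in the context, with positive incremental bid prices. Let $(d_j^*,g_i^*,D_j^*(\cdot),G_i^*(\cdot))$ be an optimal solution with associated prices $(\pi^*,\Pi^*(\cdot))$. Then the expected uplift payments are zero: $\mathcal{M}_i^U=0$ for all $i\in\mathcal{G}$ and $\mathcal{M}_j^U=0$ for all $j\in\mathcal{D}$.
   Context: Finite nonempty sets of suppliers $\mathcal{G}$ and consumers $\mathcal{D}$; a finite scenario set $\Omega$ with probabilities $p(\omega)>0$, $\sum_\omega p(\omega)=1$, $\mathbb{E}[Y(\omega)]=\sum_\omega p(\omega)Y(\omega)$. Data: bid prices $\alpha_i^g,\alpha_j^d\ge 0$, incremental bid prices $\Delta\alpha_i^{g,\pm},\Delta\alpha_j^{d,\pm}$, real-time capacities $\bar G_i(\omega),\bar D_j(\omega)\ge 0$. $(x)_+=\max\{x,0\}$, $(x)_-=\max\{-x,0\}$. Cost functions: $C_i^g(\omega)=\alpha_i^gG_i(\omega)+\Delta\alpha_i^{g,+}(G_i(\omega)-g_i)_++\Delta\alpha_i^{g,-}(G_i(\omega)-g_i)_-$ and $C_j^d(\omega)=-\alpha_j^dD_j(\omega)+\Delta\alpha_j^{d,+}(D_j(\omega)-d_j)_-+\Delta\alpha_j^{d,-}(D_j(\omega)-d_j)_+$. The single-node problem: minimize $\sum_i\mathbb{E}[C_i^g(\omega)]+\sum_j\mathbb{E}[C_j^d(\omega)]$ over free $g_i,d_j\in\mathbb{R}$ and real-time $G_i(\omega),D_j(\omega)$ subject to $\sum_i g_i=\sum_j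 d_j$ (multiplier $\pi$), $\sum_i(G_i(\omega)-g_i)=\sum_j(D_j(\omega)-d_j)$ for each $\omega$ (multiplier $p(\omega)\Pi(\omega)$), $0\le G_i(\omega)\le\bar G_i(\omega)$, $0\le D_j(\omega)\le\bar D_j(\omega)$. "Optimal solution with associated prices $(\pi^*,\Pi^* )$" means the solution minimizes the partial Lagrange function $\text{objective}-\pi^*(\sum_ig_i-\sum_jd_j)-\mathbb{E}[\Pi^*(\omega)(\sum_i(G_i(\omega)-g_i)-\sum_j(D_j(\omega)-d_j))]$ over all free $g_i,d_j$ and all $G_i(\cdot),D_j(\cdot)$ satisfying the bound constraints. Payments (evaluated at the solution and prices): $P_i^g(\omega)=g_i\pi+(G_i(\omega)-g_i)\Pi(\omega)$, $P_j^d(\omega)=-d_j\pi-(D_j(\omega)-d_j)\Pi(\omega)$. Expected uplifts: $\mathcal{M}_i^U:=-\min\{\mathbb{E}[P_i^g(\omega)]-\mathbb{E}[C_i^g(\omega)],0\}$ and $\mathcal{M}_j^U:=-\min\{\mathbb{E}[P_j^d(\omega)]-\mathbb{E}[C_j^d(\omega)],0\}$. *)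

theory Defs
  imports Complex_Main
begin

definition pos_part :: "real \<Rightarrow> real" where "pos_part x = max x 0"
definition neg_part :: "real \<Rightarrow> real" where "neg_part x = max (- x) 0"

definition expect :: "'w set \<Rightarrow> ('w \<Rightarrow> real) \<Rightarrow> ('w \<Rightarrow> real) \<Rightarrow> real" where
  "expect Omega p Y = (\<Sum>w\<in>Omega. p w * Y w)"

record ('g, 'd, 'w) market =
  Gs :: "'g set"
  Ds :: "'d set"
  Om :: "'w set"
  prob :: "'w \<Rightarrow> real"
  alpha_g :: "'g \<Rightarrow> real"
  alpha_d :: "'d \<Rightarrow> real"
  dalpha_gp :: "'g \<Rightarrow> real"
  dalpha_gm :: "'g \<Rightarrow> real"
  dalpha_dp :: "'d \<Rightarrow> real"
  dalpha_dm :: "'d \<Rightarrow> real"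
  Gbar :: "'g \<Rightarrow> 'w \<Rightarrow> real"
  Dbar :: "'d \<Rightarrow> 'w \<Rightarrow> real"

definition well_formed_market :: "('g, 'd, 'w) market \<Rightarrow> bool" where
  "well_formed_market M \<longleftrightarrow>
     finite (Gs M) \<and> Gs M \<noteq> {} \<and> finite (Ds M) \<and> Ds M \<noteq> {} \<and>
     finite (Om M) \<and> Om M \<noteq> {} \<and>
     (\<forall>w\<in>Om M. prob M w > 0) \<and> (\<Sum>w\<in>Om M. prob M w) = 1 \<and>
     (\<forall>i\<in>Gs M. alpha_g M i \<ge> 0) \<and> (\<forall>j\<in>Ds M. alpha_d M j \<ge> 0) \<and>
     (\<forall>i\<in>Gs M. \<forall>w\<in>Om M. Gbar M i w \<ge> 0) \<and>
     (\<forall>j\<in>Ds M. \<forall>w\<in>Om M. Dbar M j w \<ge> 0)"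

definition cost_g :: "('g, 'd, 'w) market \<Rightarrow> 'g \<Rightarrow> real \<Rightarrow> ('w \<Rightarrow> real) \<Rightarrow> 'w \<Rightarrow> real" where
  "cost_g M i gi Gi w = alpha_g M i * Gi w + dalpha_gp M i * pos_part (Gi w - gi)
       + dalpha_gm M i * neg_part (Gi w - gi)"

definition cost_d :: "('g, 'd, 'w) market \<Rightarrow> 'd \<Rightarrow> real \<Rightarrow> ('w \<Rightarrow> real) \<Rightarrow> 'w \<Rightarrow> real" where
  "cost_d M j dj Dj w = - alpha_d M j * Dj w + dalpha_dp M j * neg_part (Dj w - dj)
       + dalpha_dm M j * pos_part (Dj w - dj)"

definition objective :: "('g, 'd, 'w) market \<Rightarrow> ('g \<Rightarrow> real) \<Rightarrow> ('d \<Rightarrow> real)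
    \<Rightarrow> ('g \<Rightarrow> 'w \<Rightarrow> real) \<Rightarrow> ('d \<Rightarrow> 'w \<Rightarrow> real) \<Rightarrow> real" where
  "objective M g d G D =
     (\<Sum>i\<in>Gs M. expect (Om M) (prob M) (cost_g M i (g i) (G i)))
   + (\<Sum>j\<in>Ds M. expect (Om M) (prob M) (cost_d M j (d j) (D j)))"

definition bounds_ok :: "('g, 'd, 'w) market \<Rightarrow> ('g \<Rightarrow> 'w \<Rightarrow> real) \<Rightarrow> ('d \<Rightarrow> 'w \<Rightarrow> real) \<Rightarrow> bool" where
  "bounds_ok M G D \<longleftrightarrow>
     (\<forall>i\<in>Gs M. \<forall>w\<in>Om M. 0 \<le> G i w \<and> G i w \<le> Gbar M i w) \<and>
     (\<forall>j\<in>Ds M. \<forall>w\<in>Om M. 0 \<le> D j w \<and> D j w \<le> Dbar M j w)"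

definition feasible :: "('g, 'd, 'w) market \<Rightarrow> ('g \<Rightarrow> real) \<Rightarrow> ('d \<Rightarrow> real)
    \<Rightarrow> ('g \<Rightarrow> 'w \<Rightarrow> real) \<Rightarrow> ('d \<Rightarrow> 'w \<Rightarrow> real) \<Rightarrow> bool" where
  "feasible M g d G D \<longleftrightarrow>
     (\<Sum>i\<in>Gs M. g i) = (\<Sum>j\<in>Ds M. d j) \<and>
     (\<forall>w\<in>Om M. (\<Sum>i\<in>Gs M. G i w - g i) = (\<Sum>j\<in>Ds M. D j w - d j)) \<and>
     bounds_ok M G D"

definition lagrangian :: "('g, 'd, 'w) market \<Rightarrow> real \<Rightarrow> ('w \<Rightarrow> real) \<Rightarrow> ('g \<Rightarrow> real) \<Rightarrow> ('d \<Rightarrow> real)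
    \<Rightarrow> ('g \<Rightarrow> 'w \<Rightarrow> real) \<Rightarrow> ('d \<Rightarrow> 'w \<Rightarrow> real) \<Rightarrow> real" where
  "lagrangian M pr Pi g d G D =
     objective M g d G D - pr * ((\<Sum>i\<in>Gs M. g i) - (\<Sum>j\<in>Ds M. d j))
     - expect (Om M) (prob M)
         (\<lambda>w. Pi w * ((\<Sum>i\<in>Gs M. G i w - g i) - (\<Sum>j\<in>Ds M. D j w - d j)))"

definition optimal_with_prices :: "('g, 'd, 'w) market \<Rightarrow> ('g \<Rightarrow> real) \<Rightarrow> ('d \<Rightarrow> real)
    \<Rightarrow> ('g \<Rightarrow> 'w \<Rightarrow> real) \<Rightarrow> ('d \<Rightarrow> 'w \<Rightarrow> real) \<Rightarrow> real \<Rightarrow> ('w \<Rightarrow> real) \<Rightarrow> bool" where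
  "optimal_with_prices M g d G D pr Pi \<longleftrightarrow>
     feasible M g d G D \<and>
     (\<forall>g' d' G' D'. bounds_ok M G' D' \<longrightarrow>
        lagrangian M pr Pi g d G D \<le> lagrangian M pr Pi g' d' G' D')"

definition pay_g :: "real \<Rightarrow> ('w \<Rightarrow> real) \<Rightarrow> real \<Rightarrow> ('w \<Rightarrow> real) \<Rightarrow> 'w \<Rightarrow> real" where
  "pay_g pr Pi gi Gi w = gi * pr + (Gi w - gi) * Pi w"

definition pay_d :: "real \<Rightarrow> ('w \<Rightarrow> real) \<Rightarrow> real \<Rightarrow> ('w \<Rightarrow> real) \<Rightarrow> 'w \<Rightarrow> real" where
  "pay_d pr Pi dj Dj w = - dj * pr - (Dj w - dj) * Pi w"

definition uplift_g :: "('g, 'd, 'w) market \<Rightarrow> real \<Rightarrow> ('w \<Rightarrow> real) \<Rightarrow> 'g \<Rightarrow> real \<Rightarrow> ('w \<Rightarrow> real) \<Rightarrow> real" where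
  "uplift_g M pr Pi i gi Gi =
     - min (expect (Om M) (prob M) (pay_g pr Pi gi Gi) - expect (Om M) (prob M) (cost_g M i gi Gi)) 0"

definition uplift_d :: "('g, 'd, 'w) market \<Rightarrow> real \<Rightarrow> ('w \<Rightarrow> real) \<Rightarrow> 'd \<Rightarrow> real \<Rightarrow> ('w \<Rightarrow> real) \<Rightarrow> real" where
  "uplift_d M pr Pi j dj Dj =
     - min (expect (Om M) (prob M) (pay_d pr Pi dj Dj) - expect (Om M) (prob M) (cost_d M j dj Dj)) 0"

end

theory Submission
  imports Defs
begin

definition Fg where "Fg M pr Pi i gi Gi = expect (Om M) (prob M) (cost_g M i gi Gi) - expect (Om M) (prob M) (pay_g pr Pi gi Gi)"
definition Fd where "Fd M pr Pi j dj Dj = expect (Om M) (prob M) (cost_d M j dj Dj) - expect (Om M) (prob M) (pay_d pr Pi dj Dj)"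

lemma decomp:
  assumes "(\<Sum>w\<in>Om M. prob M w) = 1"
  shows "lagrangian M pr Pi g d G D = (\<Sum>i\<in>Gs M. Fg M pr Pi i (g i) (G i)) + (\<Sum>j\<in>Ds M. Fd M pr Pi j (d j) (D j))"
proof -
  let ?O = "Om M" and ?p = "prob M"
  have pg: "expect ?O ?p (pay_g pr Pi gi Gi) = gi * pr + (\<Sum>w\<in>?O. ?p w * ((Gi w - gi) * Pi w))" for gi Gi
  proof -
    have "(\<Sum>w\<in>?O. ?p w * (gi * pr)) = gi * pr" using assms by (simp flip: sum_distrib_right)
    then show ?thesis unfolding expect_def pay_g_def distrib_left sum.distrib by simp
  qed
  have pd: "expect ?O ?p (pay_d pr Pi dj Dj) = - dj * pr - (\<Sum>w\<in>?O. ?p w * ((Dj w - dj) * Pi w))" for dj Dj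
  proof -
    have "(\<Sum>w\<in>?O. ?p w * (- dj * pr)) = - dj * pr" using assms by (simp add: sum_negf flip: sum_distrib_right)
    then show ?thesis unfolding expect_def pay_d_def right_diff_distrib sum_subtractf by simp
  qed
  have sw: "expect ?O ?p (\<lambda>w. Pi w * ((\<Sum>i\<in>Gs M. G i w - g i) - (\<Sum>j\<in>Ds M. D j w - d j)))
     = (\<Sum>i\<in>Gs M. \<Sum>w\<in>?O. ?p w * ((G i w - g i) * Pi w)) - (\<Sum>j\<in>Ds M. \<Sum>w\<in>?O. ?p w * ((D j w - d j) * Pi w))"
  proof -
    have "(\<Sum>w\<in>?O. ?p w * (Pi w * ((\<Sum>i\<in>Gs M. G i w - g i) - (\<Sum>j\<in>Ds M. D j w - d j))))
      = (\<Sum>w\<in>?O. (\<Sum>i\<in>Gs M. ?p w * ((G i w - g i) * Pi w)) - (\<Sum>j\<in>Ds M. ?p w * ((D j w - d j) * Pi w)))"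
      by (rule sum.cong) (simp_all add: right_diff_distrib sum_distrib_left mult_ac)
    also have "\<dots> = (\<Sum>i\<in>Gs M. \<Sum>w\<in>?O. ?p w * ((G i w - g i) * Pi w)) - (\<Sum>j\<in>Ds M. \<Sum>w\<in>?O. ?p w * ((D j w - d j) * Pi w))"
      by (simp add: sum_subtractf sum.swap[of _ ?O])
    finally show ?thesis unfolding expect_def .
  qed
  show ?thesis
    unfolding lagrangian_def objective_def Fg_def Fd_def sw pg pd
    by (simp add: sum_subtractf sum.distrib sum_distrib_left algebra_simps)
qed

lemma zero_g: "Fg M pr Pi i 0 (\<lambda>w. 0) = 0"
  unfolding Fg_def expect_def cost_g_def pay_g_def pos_part_def neg_part_def by simp
lemma zero_d: "Fd M pr Pi j 0 (\<lambda>w. 0) = 0"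
  unfolding Fd_def expect_def cost_d_def pay_d_def pos_part_def neg_part_def by simp

theorem theorem5:
  fixes M :: "('g, 'd, 'w) market"
    and g :: "'g \<Rightarrow> real" and d :: "'d \<Rightarrow> real"
    and G :: "'g \<Rightarrow> 'w \<Rightarrow> real" and D :: "'d \<Rightarrow> 'w \<Rightarrow> real"
    and pr :: real and Pi :: "'w \<Rightarrow> real"
  assumes "well_formed_market M"
    and "\<forall>i\<in>Gs M. dalpha_gp M i > 0 \<and> dalpha_gm M i > 0"
    and "\<forall>j\<in>Ds M. dalpha_dp M j > 0 \<and> dalpha_dm M j > 0"
    and "optimal_with_prices M g d G D pr Pi"
  shows "(\<forall>i\<in>Gs M. uplift_g M pr Pi i (g i) (G i) = 0) \<and>
         (\<forall>j\<in>Ds M. uplift_d M pr Pi j (d j) (D j) = 0)"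
proof -
  have wf: "finite (Gs M)" "finite (Ds M)" "(\<Sum>w\<in>Om M. prob M w) = 1"
     "\<forall>i\<in>Gs M. \<forall>w\<in>Om M. Gbar M i w \<ge> 0" "\<forall>j\<in>Ds M. \<forall>w\<in>Om M. Dbar M j w \<ge> 0"
    using assms(1) unfolding well_formed_market_def by auto
  have fe: "bounds_ok M G D" and opt: "\<And>g' d' G' D'. bounds_ok M G' D' \<Longrightarrow>
        lagrangian M pr Pi g d G D \<le> lagrangian M pr Pi g' d' G' D'"
    using assms(4) unfolding optimal_with_prices_def feasible_def by auto
  have A: "Fg M pr Pi i (g i) (G i) \<le> 0" if i: "i \<in> Gs M" for i
  proof -
    let ?g = "g(i:=0)" and ?G = "G(i:=(\<lambda>w. 0))"
    have b: "bounds_ok M ?G D" using fe wf(4) unfolding bounds_ok_def by auto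
    have "(\<Sum>k\<in>Gs M. Fg M pr Pi k (g k) (G k)) = Fg M pr Pi i (g i) (G i) + (\<Sum>k\<in>Gs M - {i}. Fg M pr Pi k (g k) (G k))"
      using wf(1) i by (simp add: sum.remove)
    moreover have "(\<Sum>k\<in>Gs M. Fg M pr Pi k (?g k) (?G k)) = (\<Sum>k\<in>Gs M - {i}. Fg M pr Pi k (g k) (G k))"
      using wf(1) i by (simp add: sum.remove zero_g)
    ultimately show ?thesis using opt[of ?G D ?g d, OF b] unfolding decomp[OF wf(3)] by simp
  qed
  have B: "Fd M pr Pi j (d j) (D j) \<le> 0" if j: "j \<in> Ds M" for j
  proof -
    let ?d = "d(j:=0)" and ?D = "D(j:=(\<lambda>w. 0))"
    have b: "bounds_ok M G ?D" using fe wf(5) unfolding bounds_ok_def by auto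
    have "(\<Sum>k\<in>Ds M. Fd M pr Pi k (d k) (D k)) = Fd M pr Pi j (d j) (D j) + (\<Sum>k\<in>Ds M - {j}. Fd M pr Pi k (d k) (D k))"
      using wf(2) j by (simp add: sum.remove)
    moreover have "(\<Sum>k\<in>Ds M. Fd M pr Pi k (?d k) (?D k)) = (\<Sum>k\<in>Ds M - {j}. Fd M pr Pi k (d k) (D k))"
      using wf(2) j by (simp add: sum.remove zero_d)
    ultimately show ?thesis using opt[of G ?D g ?d, OF b] unfolding decomp[OF wf(3)] by simp
  qed
  show ?thesis using A B unfolding uplift_g_def uplift_d_def Fg_def Fd_def by auto
qed

end
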